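(* The map $\mathrm{J}_1:C^\infty(\mathbb{S}^3)\times\mathrm{CL}\to T^*\mathrm{CL}$, $\mathrm{J}_1(u,T)=d\mathrm{I}[u](T)$, is a submersion, i.e. its derivative is surjective onto the tangent space of $T^*\mathrm{CL}$ at every point.
   Context: $\mathbb{S}^3\subset\mathbb{R}^4=\mathbb{R}^2\times\mathbb{R}^2$ is the unit sphere; $T_0=\{(x,y):\|x\|^2=\|y\|^2=1/2\}$; $\mathrm{CL}=\{MT_0:M\in O(4)\}$ is the 4-dimensional manifold of Clifford tori. For $u\in C^\infty(\mathbb{S}^3)$, $\mathrm{I}[u]\in C^\infty(\mathrm{CL})$ is $\mathrm{I}[u](T)=\int_Tu\,dA_T$. $C^\infty(\mathbb{S}^3)$ is given the smooth (Fréchet) topology. *)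

theory Defs
  imports "HOL-Analysis.Analysis"
begin

text \<open>C-infinity functions on R^4: all iterated partial derivatives exist.
  D xs is the partial derivative along the index list xs.\<close>
definition smooth4 :: "(real^4 \<Rightarrow> real) \<Rightarrow> bool" where
  "smooth4 f \<longleftrightarrow> (\<exists>D :: 4 list \<Rightarrow> real^4 \<Rightarrow> real. D [] = f \<and>
     (\<forall>xs x. (D xs has_derivative (\<lambda>h. \<Sum>i\<in>UNIV. h $ i * D (i # xs) x)) (at x)))"

text \<open>The unit sphere S^3 and C-infinity(S^3) as restrictions of smooth functions on R^4.\<close>
definition S3 :: "(real^4) set" where "S3 = {x. norm x = 1}"

definition Cinf_S3 :: "(real^4 \<Rightarrow> real) set" where
  "Cinf_S3 = {u. \<exists>f. smooth4 f \<and> (\<forall>x\<in>S3. u x = f x) \<and> (\<forall>x. x \<notin> S3 \<longrightarrow> u x = 0)}"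

text \<open>Standard parametrisation of the Clifford torus T0, coordinates (x1,x2,y1,y2).\<close>
definition cliff :: "real \<Rightarrow> real \<Rightarrow> real^4" where
  "cliff s t = vector [cos s / sqrt 2, sin s / sqrt 2, cos t / sqrt 2, sin t / sqrt 2]"

definition T0 :: "(real^4) set" where
  "T0 = {x. (x$1)^2 + (x$2)^2 = 1/2 \<and> (x$3)^2 + (x$4)^2 = 1/2}"

definition CL :: "(real^4) set set" where
  "CL = {((*v) M) ` T0 | M. orthogonal_matrix M}"

text \<open>I[u](T) = integral of u over T w.r.t. area; for T = M T0 the area element
  of the parametrisation cliff is (1/2) ds dt.\<close>
definition Iint :: "(real^4 \<Rightarrow> real) \<Rightarrow> (real^4) set \<Rightarrow> real" where
  "Iint u T = (THE c. \<exists>M. orthogonal_matrix M \<and> T = ((*v) M) ` T0 \<and>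
      c = integral (cbox (0,0) (2*pi, 2*pi)) (\<lambda>(s,t). u (M *v cliff s t) / 2))"

text \<open>Rotation in the (i,j) coordinate plane.\<close>
definition rot :: "4 \<Rightarrow> 4 \<Rightarrow> real \<Rightarrow> real^4^4" where
  "rot i j \<theta> = (\<chi> k l. if k = i \<and> l = i then cos \<theta> else if k = j \<and> l = j then cos \<theta>
      else if k = i \<and> l = j then - sin \<theta> else if k = j \<and> l = i then sin \<theta>
      else if k = l then 1 else 0)"

text \<open>Local chart of CL around M0 T0: the generators E13,E14,E23,E24 complement
  the Lie algebra span(E12,E34) of the stabiliser of T0.\<close>
definition chartCL :: "real^4^4 \<Rightarrow> real^4 \<Rightarrow> (real^4) set" where
  "chartCL M0 a = ((*v) (M0 ** rot 1 3 (a$1) ** rot 1 4 (a$2) ** rot 2 3 (a$3) ** rot 2 4 (a$4))) ` T0"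

text \<open>J1(u,T) = dI[u](T) in the induced canonical chart (a, eta) of T*CL.\<close>
definition J1chart :: "real^4^4 \<Rightarrow> (real^4 \<Rightarrow> real) \<Rightarrow> real^4 \<Rightarrow> (real^4) \<times> (real^4)" where
  "J1chart M0 u a = (a, \<chi> i. frechet_derivative (\<lambda>b. Iint u (chartCL M0 b)) (at a) (axis i 1))"

end

theory Submission
  imports Defs
begin

(* ---- from A.thy ---- *)
lemma vector_4 [simp]:
 "(vector [x,y,z,w] ::('a::zero)^4)$1 = x"
 "(vector [x,y,z,w] ::('a::zero)^4)$2 = y"
 "(vector [x,y,z,w] ::('a::zero)^4)$3 = z"
 "(vector [x,y,z,w] ::('a::zero)^4)$4 = w"
  unfolding vector_def by simp_all

lemma four_neq [simp]: "(1::4) \<noteq> 2" "(1::4) \<noteq> 3" "(1::4) \<noteq> 4" "(2::4) \<noteq> 3" "(2::4) \<noteq> 4" "(3::4) \<noteq> 4"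
  "(2::4) \<noteq> 1" "(3::4) \<noteq> 1" "(4::4) \<noteq> 1" "(3::4) \<noteq> 2" "(4::4) \<noteq> 2" "(4::4) \<noteq> 3"
  by simp_all

lemma orth_rot: "orthogonal_matrix (rot 1 3 x)" "orthogonal_matrix (rot 1 4 x)"
  "orthogonal_matrix (rot 2 3 x)" "orthogonal_matrix (rot 2 4 x)"
  unfolding orthogonal_matrix_def rot_def
  by (simp_all add: vec_eq_iff forall_4 matrix_matrix_mult_def transpose_def sum_4 mat_def power2_eq_square[symmetric])

(* ---- from B.thy ---- *)
lemma has_derivative_vec_lambda4:
  fixes f :: "4 \<Rightarrow> 'a::real_normed_vector \<Rightarrow> real"
  assumes "\<And>k. ((f k) has_derivative (f' k)) (at x)"
  shows "((\<lambda>x. \<chi> k. f k x) has_derivative (\<lambda>h. \<chi> k. f' k h)) (at x)"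
  using assms
  by (subst has_derivative_componentwise_within) (auto simp: Basis_vec_def cart_eq_inner_axis[symmetric])

definition rv :: "4 \<Rightarrow> 4 \<Rightarrow> nat \<Rightarrow> real \<Rightarrow> real^4 \<Rightarrow> real^4" where
  "rv i j n \<theta> w = (\<chi> k. if k = i then cos (\<theta> + real n * pi / 2) * w$i - sin (\<theta> + real n * pi / 2) * w$j
     else if k = j then sin (\<theta> + real n * pi / 2) * w$i + cos (\<theta> + real n * pi / 2) * w$j
     else if n = 0 then w$k else 0)"

lemma cos_Suc_shift: "cos (\<theta> + real (Suc n) * pi / 2) = - sin (\<theta> + real n * pi / 2)"
proof -
  have "\<theta> + real (Suc n) * pi / 2 = (\<theta> + real n * pi / 2) + pi/2" by (simp add: field_simps)
  moreover have "cos (x + pi/2) = - sin x" for x by (simp add: cos_add)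
  ultimately show ?thesis by metis
qed

lemma sin_Suc_shift: "sin (\<theta> + real (Suc n) * pi / 2) = cos (\<theta> + real n * pi / 2)"
proof -
  have "\<theta> + real (Suc n) * pi / 2 = (\<theta> + real n * pi / 2) + pi/2" by (simp add: field_simps)
  moreover have "sin (x + pi/2) = cos x" for x by (simp add: sin_add)
  ultimately show ?thesis by metis
qed

lemma rot_rv: "rot 1 3 \<theta> *v w = rv 1 3 0 \<theta> w" "rot 1 4 \<theta> *v w = rv 1 4 0 \<theta> w"
  "rot 2 3 \<theta> *v w = rv 2 3 0 \<theta> w" "rot 2 4 \<theta> *v w = rv 2 4 0 \<theta> w"
  unfolding rot_def rv_def
  by (simp_all add: vec_eq_iff forall_4 matrix_vector_mult_def sum_4)

lemma rv_add: "rv i j n \<theta> (x + y) = rv i j n \<theta> x + rv i j n \<theta> y"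
  by (simp add: rv_def vec_eq_iff algebra_simps)
lemma rv_scale: "rv i j n \<theta> (r *\<^sub>R x) = r *\<^sub>R rv i j n \<theta> x"
  by (simp add: rv_def vec_eq_iff algebra_simps)
lemma rv_zero: "rv i j n \<theta> 0 = 0"
  by (simp add: rv_def vec_eq_iff)

lemma rv_deriv:
  assumes "i \<noteq> j" "(w has_derivative w') (at a)"
  shows "((\<lambda>a. rv i j n (a$k) (w a)) has_derivative
     (\<lambda>h. h$k *\<^sub>R rv i j (Suc n) (a$k) (w a) + rv i j n (a$k) (w' h))) (at a)"
proof -
  have wc: "\<And>m. ((\<lambda>a. w a $ m) has_derivative (\<lambda>h. w' h $ m)) (at a)"
    using assms(2) bounded_linear.has_derivative[OF bounded_linear_vec_nth] by blast
  have ak: "((\<lambda>a. a $ k) has_derivative (\<lambda>h. h $ k)) (at a)"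
    using bounded_linear.has_derivative[OF bounded_linear_vec_nth has_derivative_ident] by blast
  have cs: "((\<lambda>a. cos (a$k + real n * pi / 2)) has_derivative (\<lambda>h. h$k * - sin (a$k + real n * pi / 2))) (at a)"
    "((\<lambda>a. sin (a$k + real n * pi / 2)) has_derivative (\<lambda>h. h$k * cos (a$k + real n * pi / 2))) (at a)"
    using has_derivative_compose[OF has_derivative_add_const[OF ak] DERIV_cos[unfolded has_field_derivative_def]]
      has_derivative_compose[OF has_derivative_add_const[OF ak] DERIV_sin[unfolded has_field_derivative_def]]
    by (auto simp: mult.commute)
  have comp: "((\<lambda>a. rv i j n (a$k) (w a) $ m) has_derivative
     (\<lambda>h. (h$k *\<^sub>R rv i j (Suc n) (a$k) (w a) + rv i j n (a$k) (w' h)) $ m)) (at a)" for m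
  proof -
    consider "m = i" | "m = j" | "m \<noteq> i" "m \<noteq> j" "n = 0" | "m \<noteq> i" "m \<noteq> j" "n \<noteq> 0" by blast
    then show ?thesis
    proof cases
      case 1
      show ?thesis unfolding rv_def cos_Suc_shift sin_Suc_shift using 1 assms(1)
        apply simp
        apply (rule has_derivative_eq_rhs)
        apply (rule has_derivative_diff has_derivative_mult cs wc)+
        apply (simp add: algebra_simps)
        done
    next
      case 2
      show ?thesis unfolding rv_def cos_Suc_shift sin_Suc_shift using 2 assms(1)
        apply simp
        apply (rule has_derivative_eq_rhs)
        apply (rule has_derivative_add has_derivative_mult cs wc)+
        apply (simp add: algebra_simps)
        done
    next
      case 3
      show ?thesis unfolding rv_def using 3 assms(1)
        by (simp add: wc)
    next
      case 4
      show ?thesis unfolding rv_def using 4 assms(1)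
        by simp
    qed
  qed
  have "((\<lambda>a. \<chi> m. rv i j n (a$k) (w a) $ m) has_derivative
     (\<lambda>h. \<chi> m. (h$k *\<^sub>R rv i j (Suc n) (a$k) (w a) + rv i j n (a$k) (w' h)) $ m)) (at a)"
    by (rule has_derivative_vec_lambda4[OF comp])
  moreover have "(\<lambda>h. \<chi> m. (h$k *\<^sub>R rv i j (Suc n) (a$k) (w a) + rv i j n (a$k) (w' h)) $ m) =
     (\<lambda>h. h$k *\<^sub>R rv i j (Suc n) (a$k) (w a) + rv i j n (a$k) (w' h))"
    by (simp only: vec_lambda_eta)
  ultimately show ?thesis by (simp only: vec_lambda_eta)
qed

(* ---- from C.thy ---- *)
definition PP :: "real^4^4 \<Rightarrow> nat \<Rightarrow> nat \<Rightarrow> nat \<Rightarrow> nat \<Rightarrow> real^4 \<Rightarrow> real^4 \<Rightarrow> real^4" where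
  "PP M n1 n2 n3 n4 a c = M *v rv 1 3 n1 (a$1) (rv 1 4 n2 (a$2) (rv 2 3 n3 (a$3) (rv 2 4 n4 (a$4) c)))"

lemma PP_deriv:
  "((\<lambda>a. PP M n1 n2 n3 n4 a c) has_derivative
    (\<lambda>h. h$1 *\<^sub>R PP M (Suc n1) n2 n3 n4 a c + h$2 *\<^sub>R PP M n1 (Suc n2) n3 n4 a c
       + h$3 *\<^sub>R PP M n1 n2 (Suc n3) n4 a c + h$4 *\<^sub>R PP M n1 n2 n3 (Suc n4) a c)) (at a)"
proof -
  have d4: "((\<lambda>a. rv 2 4 n4 (a$4) c) has_derivative (\<lambda>h. h$4 *\<^sub>R rv 2 4 (Suc n4) (a$4) c)) (at a)"
    using rv_deriv[of 2 4 "\<lambda>a. c" "\<lambda>h. 0" a n4 4] by (simp add: rv_zero)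
  note d3 = rv_deriv[OF _ d4, of 2 3 n3 3, simplified]
  note d2 = rv_deriv[OF _ d3, of 1 4 n2 2, simplified]
  note d1 = rv_deriv[OF _ d2, of 1 3 n1 1, simplified]
  note d0 = bounded_linear.has_derivative[OF matrix_vector_mul_bounded_linear d1, of M]
  show ?thesis unfolding PP_def
    by (rule has_derivative_eq_rhs[OF d0]) (simp add: rv_add rv_scale algebra_simps)
qed

(* ---- from D.thy ---- *)
lemma cont_if_const[continuous_intros]:
  "continuous_on S A \<Longrightarrow> continuous_on S B \<Longrightarrow> continuous_on S (\<lambda>x. if P then A x else B x)"
  by (cases P) auto

lemma rv_cont[continuous_intros]:
  fixes S :: "'a::metric_space set"
  assumes "continuous_on S ft" "continuous_on S fw"
  shows "continuous_on S (\<lambda>x. rv i j n (ft x) (fw x))"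
proof -
  have c1: "continuous_on S (\<lambda>x. ft x + real n * pi / 2)" by (intro continuous_intros assms)
  show ?thesis unfolding rv_def
  by (auto intro!: continuous_intros assms continuous_on_cos[OF c1] continuous_on_sin[OF c1])
qed

lemma PP_cont[continuous_intros]:
  fixes S :: "'a::metric_space set"
  assumes "continuous_on S fa" "continuous_on S fc"
  shows "continuous_on S (\<lambda>x. PP M n1 n2 n3 n4 (fa x) (fc x))"
  unfolding PP_def
  by (intro bounded_linear.continuous_on[OF matrix_vector_mul_bounded_linear] continuous_intros assms)

lemma leib:
  fixes \<phi> :: "real^4 \<Rightarrow> real\<times>real \<Rightarrow> real" and g :: "4 \<Rightarrow> real^4 \<Rightarrow> real\<times>real \<Rightarrow> real"
  assumes d: "\<And>a t. ((\<lambda>a. \<phi> a t) has_derivative (\<lambda>h. \<Sum>k\<in>UNIV. h$k * g k a t)) (at a)"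
    and cg: "\<And>k. continuous_on UNIV (\<lambda>p. g k (fst p) (snd p))"
    and cf: "continuous_on UNIV (\<lambda>p. \<phi> (fst p) (snd p))"
  shows "((\<lambda>a. integral (cbox x y) (\<phi> a)) has_derivative
          (\<lambda>h. \<Sum>k\<in>UNIV. h$k * integral (cbox x y) (g k a))) (at a)"
proof -
  define G where "G a t = (\<chi> k. g k a t)" for a t
  have cG: "continuous_on UNIV (\<lambda>p. G (fst p) (snd p))"
    unfolding G_def by (intro continuous_intros cg)
  have cP: "continuous_on (cbox x y) (\<lambda>t. (a, t))" for a :: "real^4"
    by (intro continuous_intros)
  have cgk: "continuous_on (cbox x y) (g k a)" for k a
    using continuous_on_compose2[OF cg[of k] cP[of a]] by simp
  have cfa: "continuous_on (cbox x y) (\<phi> a)" for a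
    using continuous_on_compose2[OF cf cP[of a]] by simp
  have cB: "continuous_on (UNIV \<times> cbox x y) (\<lambda>(a, t). blinfun_inner_left (G a t))"
  proof -
    have "continuous_on UNIV (\<lambda>p. blinfun_inner_left (G (fst p) (snd p)))"
      by (intro continuous_intros cG)
    then show ?thesis by (rule continuous_on_subset[THEN continuous_on_eq]) (auto simp: case_prod_beta)
  qed
  have eqd: "(\<lambda>h. \<Sum>k\<in>UNIV. h$k * g k a t) = blinfun_apply (blinfun_inner_left (G a t))" for a t
    by (auto simp: G_def inner_vec_def)
  have L: "((\<lambda>a. integral (cbox x y) (\<phi> a)) has_derivative
           integral (cbox x y) (\<lambda>t. blinfun_inner_left (G a t))) (at a within UNIV)"
    apply (rule leibniz_rule[where fx="\<lambda>a t. blinfun_inner_left (G a t)"])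
    using d[unfolded eqd] cB cfa by (auto intro: integrable_continuous)
  have cBa: "continuous_on (cbox x y) (\<lambda>t. blinfun_inner_left (G a t))"
    using continuous_on_compose2[OF cB cP[of a]] by (auto simp: subset_iff)
  have "blinfun_apply (integral (cbox x y) (\<lambda>t. blinfun_inner_left (G a t))) h
     = (\<Sum>k\<in>UNIV. h$k * integral (cbox x y) (g k a))" for h
  proof -
    have "blinfun_apply (integral (cbox x y) (\<lambda>t. blinfun_inner_left (G a t))) h
       = integral (cbox x y) (\<lambda>t. \<Sum>k\<in>UNIV. h$k * g k a t)"
      by (subst blinfun_apply_integral[OF integrable_continuous[OF cBa]]) (simp add: G_def inner_vec_def)
    also have "\<dots> = (\<Sum>k\<in>UNIV. integral (cbox x y) (\<lambda>t. h$k * g k a t))"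
      by (rule integral_sum) (auto intro!: integrable_continuous continuous_intros cgk)
    also have "\<dots> = (\<Sum>k\<in>UNIV. h$k * integral (cbox x y) (g k a))"
      by simp
    finally show ?thesis .
  qed
  then have "blinfun_apply (integral (cbox x y) (\<lambda>t. blinfun_inner_left (G a t))) =
     (\<lambda>h. \<Sum>k\<in>UNIV. h$k * integral (cbox x y) (g k a))" by (simp add: fun_eq_iff)
  then show ?thesis using L by simp
qed

(* ---- from E.thy ---- *)
definition PPn :: "real^4^4 \<Rightarrow> (4 \<Rightarrow> nat) \<Rightarrow> real^4 \<Rightarrow> real^4 \<Rightarrow> real^4" where
  "PPn M n a c = PP M (n 1) (n 2) (n 3) (n 4) a c"

lemma PPn_deriv:
  "((\<lambda>a. PPn M n a c) has_derivative (\<lambda>h. \<Sum>k\<in>UNIV. h$k *\<^sub>R PPn M (n(k := Suc (n k))) a c)) (at a)"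
  unfolding PPn_def sum_4 using PP_deriv[of M "n 1" "n 2" "n 3" "n 4" c a] by simp

lemma PPn_cont[continuous_intros]:
  fixes S :: "'a::metric_space set"
  assumes "continuous_on S fa" "continuous_on S fc"
  shows "continuous_on S (\<lambda>x. PPn M n (fa x) (fc x))"
  unfolding PPn_def by (intro continuous_intros assms)

lemma cliff_eq: "cliff s t = (cos s / sqrt 2) *\<^sub>R axis 1 1 + (sin s / sqrt 2) *\<^sub>R axis 2 1
   + (cos t / sqrt 2) *\<^sub>R axis 3 1 + (sin t / sqrt 2) *\<^sub>R axis 4 1"
  by (simp add: cliff_def vec_eq_iff forall_4 axis_def)

lemma cliff_cont[continuous_intros]:
  fixes S :: "'a::metric_space set"
  assumes "continuous_on S fs" "continuous_on S ft"
  shows "continuous_on S (\<lambda>x. cliff (fs x) (ft x))"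
  unfolding cliff_eq by (intro continuous_intros assms) auto

definition sm :: "(4 list \<Rightarrow> real^4 \<Rightarrow> real) \<Rightarrow> bool" where
  "sm D \<longleftrightarrow> (\<forall>xs x. (D xs has_derivative (\<lambda>h. \<Sum>i\<in>UNIV. h $ i * D (i # xs) x)) (at x))"

lemma smooth4_sm: "smooth4 f \<longleftrightarrow> (\<exists>D. D [] = f \<and> sm D)"
  unfolding smooth4_def sm_def by blast

lemma sm_cont: "sm D \<Longrightarrow> continuous_on UNIV (D xs)"
  unfolding sm_def by (meson continuous_at_imp_continuous_on has_derivative_continuous)

lemma DP_deriv:
  assumes "sm D"
  shows "((\<lambda>a. D xs (PPn M n a c)) has_derivative
     (\<lambda>h. \<Sum>k\<in>UNIV. h$k * (\<Sum>i\<in>UNIV. D (i#xs) (PPn M n a c) * PPn M (n(k := Suc (n k))) a c $ i))) (at a)"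
proof -
  have hD: "(D xs has_derivative (\<lambda>h. \<Sum>i\<in>UNIV. h $ i * D (i # xs) (PPn M n a c))) (at (PPn M n a c))"
    using assms unfolding sm_def by blast
  show ?thesis
    apply (rule has_derivative_eq_rhs[OF has_derivative_compose[OF PPn_deriv hD]])
    apply (simp add: fun_eq_iff sum_component sum_distrib_left sum_distrib_right mult_ac)
    apply (subst sum.swap) apply simp
    done
qed

(* ---- from F.thy ---- *)
definition KK :: "(real \<times> real) set" where "KK = cbox (0,0) (2*pi, 2*pi)"
definition cl :: "real \<times> real \<Rightarrow> real^4" where "cl st = cliff (fst st) (snd st)"
definition dl :: "4 \<Rightarrow> 4 \<Rightarrow> nat" where "dl k = (\<lambda>_. 0)(k := Suc 0)"

definition phi where "phi D M a st = D [] (PPn M (\<lambda>_. 0) a (cl st)) / 2"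
definition gk where "gk D M k a st = (\<Sum>i\<in>UNIV. D [i] (PPn M (\<lambda>_. 0) a (cl st)) * PPn M (dl k) a (cl st) $ i) / 2"
definition hkl where "hkl D M k l a st = (\<Sum>i\<in>UNIV.
    (\<Sum>m\<in>UNIV. D [m,i] (PPn M (\<lambda>_. 0) a (cl st)) * PPn M (dl l) a (cl st) $ m) * PPn M (dl k) a (cl st) $ i
    + D [i] (PPn M (\<lambda>_. 0) a (cl st)) * PPn M ((dl k)(l := Suc (dl k l))) a (cl st) $ i) / 2"

lemma sum_div2: "(\<Sum>l\<in>L. h l * S l) / 2 = (\<Sum>l\<in>L. h l * (S l / 2 :: real))"
  by (simp add: sum_divide_distrib)

lemma sum_swap_alg:
  fixes A B :: "'i \<Rightarrow> real" and \<alpha> \<beta> :: "'l \<Rightarrow> 'i \<Rightarrow> real"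
  shows "(\<Sum>i\<in>I. A i * (\<Sum>l\<in>L. h l * \<beta> l i) + (\<Sum>l\<in>L. h l * \<alpha> l i) * B i) / 2
       = (\<Sum>l\<in>L. h l * ((\<Sum>i\<in>I. \<alpha> l i * B i + A i * \<beta> l i) / 2))"
proof -
  have "(\<Sum>i\<in>I. A i * (\<Sum>l\<in>L. h l * \<beta> l i) + (\<Sum>l\<in>L. h l * \<alpha> l i) * B i)
      = (\<Sum>i\<in>I. \<Sum>l\<in>L. h l * (\<alpha> l i * B i + A i * \<beta> l i))"
    by (simp add: sum_distrib_left sum_distrib_right sum.distrib[symmetric] algebra_simps)
  also have "\<dots> = (\<Sum>l\<in>L. \<Sum>i\<in>I. h l * (\<alpha> l i * B i + A i * \<beta> l i))"
    by (rule sum.swap)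
  also have "\<dots> = (\<Sum>l\<in>L. h l * (\<Sum>i\<in>I. \<alpha> l i * B i + A i * \<beta> l i))"
    by (simp add: sum_distrib_left)
  finally show ?thesis by (subst sum_div2[symmetric]) simp
qed

lemma cl_cont[continuous_intros]: "continuous_on S f \<Longrightarrow> continuous_on S (\<lambda>x. cl (f x))"
  for S :: "'a::metric_space set"
  unfolding cl_def by (intro continuous_intros) auto

lemma phi_deriv: "sm D \<Longrightarrow> ((\<lambda>a. phi D M a st) has_derivative (\<lambda>h. \<Sum>k\<in>UNIV. h$k * gk D M k a st)) (at a)"
  unfolding phi_def gk_def
  apply (rule has_derivative_eq_rhs)
   apply (rule has_derivative_divide'[OF DP_deriv[of D "[]" M "\<lambda>_. 0" "cl st" a] has_derivative_const])
    apply assumption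
   apply simp
  apply (simp add: fun_eq_iff dl_def sum_div2[symmetric] sum_divide_distrib[symmetric])
  done

lemma gk_deriv: "sm D \<Longrightarrow> ((\<lambda>a. gk D M k a st) has_derivative (\<lambda>h. \<Sum>l\<in>UNIV. h$l * hkl D M k l a st)) (at a)"
proof -
  assume sD: "sm D"
  have P: "((\<lambda>a. PPn M (dl k) a (cl st) $ i) has_derivative
     (\<lambda>h. \<Sum>l\<in>UNIV. h$l * PPn M ((dl k)(l := Suc (dl k l))) a (cl st) $ i)) (at a)" for i
    using bounded_linear.has_derivative[OF bounded_linear_vec_nth PPn_deriv[of M "dl k" "cl st" a], of i]
    by (simp add: sum_component)
  have Di: "((\<lambda>a. D [i] (PPn M (\<lambda>_. 0) a (cl st))) has_derivative
     (\<lambda>h. \<Sum>l\<in>UNIV. h$l * (\<Sum>m\<in>UNIV. D [m,i] (PPn M (\<lambda>_. 0) a (cl st)) * PPn M (dl l) a (cl st) $ m))) (at a)" for i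
    using DP_deriv[OF sD, of "[i]" M "\<lambda>_. 0" "cl st" a] by (simp add: dl_def)
  show ?thesis
    unfolding gk_def
    apply (rule has_derivative_eq_rhs)
     apply (rule bounded_linear.has_derivative[OF bounded_linear_divide has_derivative_sum])
     apply (rule has_derivative_mult[OF Di P])
    apply (simp only: fun_eq_iff hkl_def sum_swap_alg)
    apply simp
    done
qed


lemma sm_cont_comp[continuous_intros]:
  "sm D \<Longrightarrow> continuous_on S f \<Longrightarrow> continuous_on S (\<lambda>x. D xs (f x))"
  using continuous_on_compose2[OF sm_cont] by blast

lemma phi_cont: "sm D \<Longrightarrow> continuous_on UNIV (\<lambda>p. phi D M (fst p) (snd p))"
  unfolding phi_def by (intro continuous_intros) auto
lemma gk_cont: "sm D \<Longrightarrow> continuous_on UNIV (\<lambda>p. gk D M k (fst p) (snd p))"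
  unfolding gk_def by (intro continuous_intros) auto
lemma hkl_cont: "sm D \<Longrightarrow> continuous_on UNIV (\<lambda>p. hkl D M k l (fst p) (snd p))"
  unfolding hkl_def by (intro continuous_intros) auto

definition Fm where "Fm D M a = integral KK (phi D M a)"
definition gradF where "gradF D M a = (\<chi> k. integral KK (gk D M k a))"

lemma F_deriv: "sm D \<Longrightarrow> ((Fm D M) has_derivative (\<lambda>h. \<Sum>k\<in>UNIV. h$k * gradF D M a $ k)) (at a)"
  unfolding Fm_def gradF_def KK_def
  by (simp add: leib phi_deriv gk_cont phi_cont)

lemma gradF_deriv: "sm D \<Longrightarrow> ((gradF D M) has_derivative
   (\<lambda>h. \<chi> k. \<Sum>l\<in>UNIV. h$l * integral KK (hkl D M k l a))) (at a)"
  unfolding gradF_def KK_def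
  by (intro has_derivative_vec_lambda4 leib gk_deriv hkl_cont gk_cont)

(* ---- from G1.thy ---- *)
lemma per_nat:
  assumes "\<And>x. \<phi> (x + 2*pi) = (\<phi> x :: real)"
  shows "\<phi> (x + real n * (2*pi)) = \<phi> x"
proof (induction n arbitrary: x)
  case 0 then show ?case by simp
next
  case (Suc n)
  have "x + real (Suc n) * (2*pi) = (x + real n * (2*pi)) + 2*pi" by (simp add: algebra_simps)
  then show ?case using assms Suc.IH by metis
qed

lemma per_int:
  assumes "\<And>x. \<phi> (x + 2*pi) = (\<phi> x :: real)"
  shows "\<phi> (x + real_of_int k * (2*pi)) = \<phi> x"
proof (cases "k \<ge> 0")
  case True
  then obtain n where "k = int n" by (metis nonneg_int_cases)
  then show ?thesis using per_nat[where \<phi>=\<phi>] assms by simp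
next
  case False
  then obtain n where n: "k = - int n" by (metis neg_int_cases less_le not_le)
  have "\<phi> ((x - real n * (2*pi)) + real n * (2*pi)) = \<phi> (x - real n * (2*pi))"
    using per_nat[where \<phi>=\<phi>] assms by blast
  then show ?thesis using n by simp
qed

lemma per_shift01:
  fixes \<phi> :: "real \<Rightarrow> real"
  assumes c: "continuous_on UNIV \<phi>" and p: "\<And>x. \<phi> (x + 2*pi) = \<phi> x" and r: "0 \<le> r" "r \<le> 2*pi"
  shows "integral {0..2*pi} (\<lambda>s. \<phi> (s + r)) = integral {0..2*pi} \<phi>"
proof -
  have int: "\<phi> integrable_on {a..b}" for a b
    by (rule integrable_continuous_interval) (rule continuous_on_subset[OF c], auto)
  have "integral {0..2*pi} (\<lambda>s. \<phi> (s + r)) = integral {r..2*pi+r} \<phi>"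
    using integral_shift_real_ivl[where a=r and c=r and b="2*pi+r" and f=\<phi>] by simp
  also have "\<dots> = integral {r..2*pi} \<phi> + integral {2*pi..2*pi+r} \<phi>"
    using Henstock_Kurzweil_Integration.integral_combine[where a=r and c="2*pi" and b="2*pi+r" and f=\<phi>] r int by simp
  also have "integral {2*pi..2*pi+r} \<phi> = integral {0..r} (\<lambda>x. \<phi> (x + 2*pi))"
    using integral_shift_real_ivl[where a="2*pi" and c="2*pi" and b="2*pi+r" and f=\<phi>] by simp
  also have "\<dots> = integral {0..r} \<phi>" using p by simp
  also have "integral {r..2*pi} \<phi> + integral {0..r} \<phi> = integral {0..2*pi} \<phi>"
    using Henstock_Kurzweil_Integration.integral_combine[where a=0 and c=r and b="2*pi" and f=\<phi>] r int by simp
  finally show ?thesis .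
qed

lemma per_shift:
  fixes \<phi> :: "real \<Rightarrow> real"
  assumes c: "continuous_on UNIV \<phi>" and p: "\<And>x. \<phi> (x + 2*pi) = \<phi> x"
  shows "integral {0..2*pi} (\<lambda>s. \<phi> (s + \<beta>)) = integral {0..2*pi} \<phi>"
proof -
  define k where "k = \<lfloor>\<beta> / (2*pi)\<rfloor>"
  define r where "r = \<beta> - real_of_int k * (2*pi)"
  have k1: "real_of_int k \<le> \<beta> / (2*pi)" unfolding k_def by (rule of_int_floor_le)
  have k2: "\<beta> / (2*pi) < real_of_int k + 1" unfolding k_def by (rule real_of_int_floor_add_one_gt)
  have "real_of_int k * (2*pi) \<le> \<beta>" using k1 by (simp add: pos_le_divide_eq)
  then have r0: "0 \<le> r" unfolding r_def by simp
  have "\<beta> < (real_of_int k + 1) * (2*pi)" using k2 by (simp add: pos_divide_less_eq)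
  then have r1: "r \<le> 2*pi" unfolding r_def by (simp add: algebra_simps)
  have "(\<lambda>s. \<phi> (s + \<beta>)) = (\<lambda>s. \<phi> (s + r))"
  proof
    fix s
    have "s + \<beta> = (s + r) + real_of_int k * (2*pi)" unfolding r_def by simp
    moreover have "\<phi> ((s + r) + real_of_int k * (2*pi)) = \<phi> (s + r)" using per_int[where \<phi>=\<phi>] p by blast
    ultimately show "\<phi> (s + \<beta>) = \<phi> (s + r)" by (simp add: add.assoc)
  qed
  then show ?thesis using per_shift01[OF c p r0 r1] by simp
qed

lemma per_reflect:
  fixes \<phi> :: "real \<Rightarrow> real"
  assumes c: "continuous_on UNIV \<phi>" and p: "\<And>x. \<phi> (x + 2*pi) = \<phi> x"
  shows "integral {0..2*pi} (\<lambda>s. \<phi> (\<beta> - s)) = integral {0..2*pi} \<phi>"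
proof -
  define \<psi> where "\<psi> x = \<phi> (x + \<beta>)" for x
  have cp: "continuous_on UNIV \<psi>" unfolding \<psi>_def
    by (rule continuous_on_compose2[OF c]) (auto intro!: continuous_intros)
  have pp: "\<psi> (x + 2*pi) = \<psi> x" for x unfolding \<psi>_def using p[of "x + \<beta>"] by (simp add: algebra_simps)
  have "integral {0..2*pi} (\<lambda>s. \<phi> (\<beta> - s)) = integral {0..2*pi} (\<lambda>s. \<psi> (- s))"
    unfolding \<psi>_def by simp
  also have "\<dots> = integral {-2*pi..0} \<psi>"
    using Henstock_Kurzweil_Integration.integral_reflect_real[where a="-2*pi" and b=0 and f=\<psi>] by simp
  also have "\<dots> = integral {0..2*pi} (\<lambda>x. \<psi> (x + -2*pi))"
    using integral_shift_real_ivl[where a="-2*pi" and c="-2*pi" and b=0 and f=\<psi>] by simp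
  also have "\<dots> = integral {0..2*pi} \<psi>"
    using pp[of "x - 2*pi" for x] by simp
  also have "\<dots> = integral {0..2*pi} \<phi>" unfolding \<psi>_def by (rule per_shift[OF c p])
  finally show ?thesis .
qed


lemma per1:
  fixes \<phi> :: "real \<Rightarrow> real"
  assumes c: "continuous_on UNIV \<phi>" and p: "\<And>x. \<phi> (x + 2*pi) = \<phi> x" and e: "\<epsilon> = 1 \<or> \<epsilon> = -1"
  shows "integral {0..2*pi} (\<lambda>s. \<phi> (\<beta> + \<epsilon> * s)) = integral {0..2*pi} \<phi>"
  using e per_shift[OF c p, of \<beta>] per_reflect[OF c p, of \<beta>] by (auto simp: add.commute)

lemma KK_iter:
  assumes "continuous_on UNIV (\<lambda>p. F (fst p) (snd p) :: real)"
  shows "integral (cbox (0,0) (2*pi,2*pi)) (\<lambda>p. F (fst p) (snd p)) =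
         integral {0..2*pi} (\<lambda>s. integral {0..2*pi} (\<lambda>t. F s t))"
  using integral_prod_continuous[of 0 0 "2*pi" "2*pi" "\<lambda>p. F (fst p) (snd p)"]
    continuous_on_subset[OF assms] by (simp add: cbox_interval)

lemma KK_swap:
  assumes "continuous_on UNIV (\<lambda>p. F (fst p) (snd p) :: real)"
  shows "integral {0..2*pi} (\<lambda>s. integral {0..2*pi} (\<lambda>t. F s t)) =
         integral {0..2*pi} (\<lambda>t. integral {0..2*pi} (\<lambda>s. F s t))"
proof -
  have "continuous_on (cbox (0, 0) (2*pi, 2*pi)) (\<lambda>(x, y). F x y)"
    using continuous_on_subset[OF assms] by (simp add: case_prod_beta')
  from integral_swap_continuous[OF this] show ?thesis by (simp add: cbox_interval)
qed

lemma cont2: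
  assumes "continuous_on UNIV (\<lambda>p. h (fst p) (snd p) :: real)"
    "continuous_on UNIV A" "continuous_on UNIV B"
  shows "continuous_on UNIV (\<lambda>p. h (A p) (B p))"
  using continuous_on_compose2[OF assms(1), of UNIV "\<lambda>p. (A p, B p)"] assms(2,3)
  by (auto intro!: continuous_intros)

lemma inv2:
  fixes h :: "real \<Rightarrow> real \<Rightarrow> real"
  assumes hc: "continuous_on UNIV (\<lambda>p. h (fst p) (snd p))"
    and p1: "\<And>s t. h (s + 2*pi) t = h s t" and p2: "\<And>s t. h s (t + 2*pi) = h s t"
    and e: "\<epsilon> = 1 \<or> \<epsilon> = -1" and d: "\<delta> = 1 \<or> \<delta> = -1"
  shows "integral (cbox (0,0) (2*pi,2*pi)) (\<lambda>p. h (\<beta> + \<epsilon> * fst p) (\<gamma> + \<delta> * snd p))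
         = integral (cbox (0,0) (2*pi,2*pi)) (\<lambda>p. h (fst p) (snd p))"
    and "integral (cbox (0,0) (2*pi,2*pi)) (\<lambda>p. h (\<beta> + \<epsilon> * snd p) (\<gamma> + \<delta> * fst p))
         = integral (cbox (0,0) (2*pi,2*pi)) (\<lambda>p. h (fst p) (snd p))"
proof -
  have c1: "continuous_on UNIV (\<lambda>x. h a x)" for a
    using cont2[OF hc, of "\<lambda>x. a" "\<lambda>x. x"] by (auto intro!: continuous_intros)
  have c2: "continuous_on UNIV (\<lambda>x. h x a)" for a
    using cont2[OF hc, of "\<lambda>x. x" "\<lambda>x. a"] by (auto intro!: continuous_intros)
  have cc: "continuous_on UNIV (\<lambda>p. h (A (fst p) (snd p)) (B (fst p) (snd p)))"
    if "continuous_on UNIV (\<lambda>p. A (fst p) (snd p))" "continuous_on UNIV (\<lambda>p. B (fst p) (snd p))" for A B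
    using cont2[OF hc that] .
  have "integral (cbox (0,0) (2*pi,2*pi)) (\<lambda>p. h (\<beta> + \<epsilon> * fst p) (\<gamma> + \<delta> * snd p))
      = integral {0..2*pi} (\<lambda>s. integral {0..2*pi} (\<lambda>t. h (\<beta> + \<epsilon> * s) (\<gamma> + \<delta> * t)))"
    by (rule KK_iter[where F="\<lambda>s t. h (\<beta> + \<epsilon> * s) (\<gamma> + \<delta> * t)"])
       (rule cc, auto intro!: continuous_intros)
  also have "\<dots> = integral {0..2*pi} (\<lambda>s. integral {0..2*pi} (\<lambda>t. h (\<beta> + \<epsilon> * s) t))"
    using per1[OF c1 p2 d] by simp
  also have "\<dots> = integral {0..2*pi} (\<lambda>t. integral {0..2*pi} (\<lambda>s. h (\<beta> + \<epsilon> * s) t))"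
    by (rule KK_swap[where F="\<lambda>s t. h (\<beta> + \<epsilon> * s) t"]) (rule cc, auto intro!: continuous_intros)
  also have "\<dots> = integral {0..2*pi} (\<lambda>t. integral {0..2*pi} (\<lambda>s. h s t))"
    using per1[OF c2 p1 e] by simp
  also have "\<dots> = integral {0..2*pi} (\<lambda>s. integral {0..2*pi} (\<lambda>t. h s t))"
    by (rule KK_swap[symmetric]) (rule hc)
  also have "\<dots> = integral (cbox (0,0) (2*pi,2*pi)) (\<lambda>p. h (fst p) (snd p))"
    by (rule KK_iter[symmetric]) (rule hc)
  finally show "integral (cbox (0,0) (2*pi,2*pi)) (\<lambda>p. h (\<beta> + \<epsilon> * fst p) (\<gamma> + \<delta> * snd p))
         = integral (cbox (0,0) (2*pi,2*pi)) (\<lambda>p. h (fst p) (snd p))" .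
  have "integral (cbox (0,0) (2*pi,2*pi)) (\<lambda>p. h (\<beta> + \<epsilon> * snd p) (\<gamma> + \<delta> * fst p))
      = integral {0..2*pi} (\<lambda>s. integral {0..2*pi} (\<lambda>t. h (\<beta> + \<epsilon> * t) (\<gamma> + \<delta> * s)))"
    by (rule KK_iter[where F="\<lambda>s t. h (\<beta> + \<epsilon> * t) (\<gamma> + \<delta> * s)"])
       (rule cc, auto intro!: continuous_intros)
  also have "\<dots> = integral {0..2*pi} (\<lambda>s. integral {0..2*pi} (\<lambda>t. h t (\<gamma> + \<delta> * s)))"
    using per1[OF c2 p1 e] by simp
  also have "\<dots> = integral {0..2*pi} (\<lambda>t. integral {0..2*pi} (\<lambda>s. h t (\<gamma> + \<delta> * s)))"
    by (rule KK_swap[where F="\<lambda>s t. h t (\<gamma> + \<delta> * s)"]) (rule cc, auto intro!: continuous_intros)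
  also have "\<dots> = integral {0..2*pi} (\<lambda>t. integral {0..2*pi} (\<lambda>s. h t s))"
    using per1[OF c1 p2 d] by simp
  also have "\<dots> = integral (cbox (0,0) (2*pi,2*pi)) (\<lambda>p. h (fst p) (snd p))"
    by (rule KK_iter[symmetric]) (rule hc)
  finally show "integral (cbox (0,0) (2*pi,2*pi)) (\<lambda>p. h (\<beta> + \<epsilon> * snd p) (\<gamma> + \<delta> * fst p))
         = integral (cbox (0,0) (2*pi,2*pi)) (\<lambda>p. h (fst p) (snd p))" .
qed

(* ---- from G2.thy ---- *)
lemma rot2:
  fixes p q r u :: real
  assumes "p^2 + q^2 = 1" "r^2 + u^2 = 1" "p*r + q*u = 0"
  shows "\<exists>\<beta> \<epsilon>. (\<epsilon> = 1 \<or> \<epsilon> = -1) \<and> (\<forall>s. p* cos s + r* sin s = cos (\<beta> + \<epsilon> * s) \<and> q* cos s + u* sin s = sin (\<beta> + \<epsilon> * s))"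
proof -
  obtain \<beta> where b: "p = cos \<beta>" "q = sin \<beta>" using sincos_total_2pi[OF assms(1)] by metis
  define d where "d = p*u - q*r"
  have d2: "d^2 = 1" unfolding d_def using assms by algebra
  have ru: "r = - d * q" "u = d * p" unfolding d_def using assms by algebra+
  have "d = 1 \<or> d = -1" using d2 by (metis power2_eq_1_iff)
  then show ?thesis
  proof
    assume "d = 1"
    then show ?thesis using ru b by (intro exI[of _ \<beta>] exI[of _ 1]) (auto simp: cos_add sin_add)
  next
    assume "d = -1"
    then show ?thesis using ru b by (intro exI[of _ \<beta>] exI[of _ "-1"]) (auto simp: cos_add sin_add cos_diff sin_diff)
  qed
qed


lemma aux_lam:
  fixes x1 x2 x3 x4 y1 y2 y3 y4 :: real
  assumes "x1^2+x2^2+x3^2+x4^2 = 1" "y1^2+y2^2+y3^2+y4^2 = 1" "x1*y1+x2*y2+x3*y3+x4*y4 = 0"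
    "x1*x2+y1*y2 = 0" "x1*x3+y1*y3 = 0" "x1*x4+y1*y4 = 0"
  shows "(x1^2+y1^2)^2 = x1^2+y1^2"
proof -
  have "(x1^2+y1^2)^2 + (x1*x2+y1*y2)^2 + (x1*x3+y1*y3)^2 + (x1*x4+y1*y4)^2
     = x1^2*(x1^2+x2^2+x3^2+x4^2) + 2*x1*y1*(x1*y1+x2*y2+x3*y3+x4*y4) + y1^2*(y1^2+y2^2+y3^2+y4^2)"
    by (simp add: power2_eq_square algebra_simps)
  then show ?thesis using assms by simp
qed

lemma aux_a12:
  fixes p1 q1 c1 p2 q2 c2 r :: real
  assumes "(p1*r + q1*r + c1)^2 + (p2*r + q2*r + c2)^2 = 1"
    "(p1*r - q1*r + c1)^2 + (p2*r - q2*r + c2)^2 = 1" "r^2 = 1/2" "q1*c1 + q2*c2 = 0" "r \<noteq> 0"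
  shows "p1*q1 + p2*q2 = 0"
proof -
  have "((p1*r + q1*r + c1)^2 + (p2*r + q2*r + c2)^2) - ((p1*r - q1*r + c1)^2 + (p2*r - q2*r + c2)^2)
      = 4*r^2*(p1*q1 + p2*q2) + 4*r*(q1*c1 + q2*c2)"
    by (simp add: power2_eq_square algebra_simps)
  then show ?thesis using assms by simp
qed

lemma stab:
  assumes K: "orthogonal_matrix K" and T: "\<And>s t. K *v cliff s t \<in> T0"
  shows "\<exists>\<beta> \<gamma> \<epsilon> \<delta>. (\<epsilon> = 1 \<or> \<epsilon> = -1) \<and> (\<delta> = 1 \<or> \<delta> = -1) \<and>
     ((\<forall>s t. K *v cliff s t = cliff (\<beta> + \<epsilon> * s) (\<gamma> + \<delta> * t)) \<or>
      (\<forall>s t. K *v cliff s t = cliff (\<beta> + \<epsilon> * t) (\<gamma> + \<delta> * s)))"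
proof -
  define k where "k i j = K$i$j" for i j
  have Kv: "K *v cliff s t = vector [
      (k 1 1 * cos s + k 1 2 * sin s + k 1 3 * cos t + k 1 4 * sin t) / sqrt 2,
      (k 2 1 * cos s + k 2 2 * sin s + k 2 3 * cos t + k 2 4 * sin t) / sqrt 2,
      (k 3 1 * cos s + k 3 2 * sin s + k 3 3 * cos t + k 3 4 * sin t) / sqrt 2,
      (k 4 1 * cos s + k 4 2 * sin s + k 4 3 * cos t + k 4 4 * sin t) / sqrt 2]" for s t
    by (simp add: vec_eq_iff forall_4 matrix_vector_mult_def sum_4 cliff_def k_def add_divide_distrib)
  have E: "(k 1 1 * cos s + k 1 2 * sin s + k 1 3 * cos t + k 1 4 * sin t)^2
         + (k 2 1 * cos s + k 2 2 * sin s + k 2 3 * cos t + k 2 4 * sin t)^2 = 1" for s t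
    using T[of s t] unfolding T0_def Kv by (simp add: power_divide)
  have colm: "\<forall>i j. (\<Sum>r\<in>UNIV. k r i * k r j) = (if i = j then 1 else 0)"
    using K unfolding orthogonal_matrix_def
    by (simp add: vec_eq_iff matrix_matrix_mult_def transpose_def mat_def k_def)
  have rowm: "\<forall>i j. (\<Sum>r\<in>UNIV. k i r * k j r) = (if i = j then 1 else 0)"
    using K unfolding orthogonal_matrix_def
    by (simp add: vec_eq_iff matrix_matrix_mult_def transpose_def mat_def k_def)
  have c11: "k 1 1 ^2 + k 2 1 ^2 + k 3 1 ^2 + k 4 1 ^2 = 1" using colm[rule_format, of 1 1] by (simp add: sum_4 power2_eq_square)
  have c22: "k 1 2 ^2 + k 2 2 ^2 + k 3 2 ^2 + k 4 2 ^2 = 1" using colm[rule_format, of 2 2] by (simp add: sum_4 power2_eq_square)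
  have c33: "k 1 3 ^2 + k 2 3 ^2 + k 3 3 ^2 + k 4 3 ^2 = 1" using colm[rule_format, of 3 3] by (simp add: sum_4 power2_eq_square)
  have c44: "k 1 4 ^2 + k 2 4 ^2 + k 3 4 ^2 + k 4 4 ^2 = 1" using colm[rule_format, of 4 4] by (simp add: sum_4 power2_eq_square)
  have c12: "k 1 1 * k 1 2 + k 2 1 * k 2 2 + k 3 1 * k 3 2 + k 4 1 * k 4 2 = 0" using colm[rule_format, of 1 2] by (simp add: sum_4)
  have c34: "k 1 3 * k 1 4 + k 2 3 * k 2 4 + k 3 3 * k 3 4 + k 4 3 * k 4 4 = 0" using colm[rule_format, of 3 4] by (simp add: sum_4)
  have r11: "k 1 1 ^2 + k 1 2 ^2 + k 1 3 ^2 + k 1 4 ^2 = 1" using rowm[rule_format, of 1 1] by (simp add: sum_4 power2_eq_square)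
  have r22: "k 2 1 ^2 + k 2 2 ^2 + k 2 3 ^2 + k 2 4 ^2 = 1" using rowm[rule_format, of 2 2] by (simp add: sum_4 power2_eq_square)
  have r12: "k 1 1 * k 2 1 + k 1 2 * k 2 2 + k 1 3 * k 2 3 + k 1 4 * k 2 4 = 0" using rowm[rule_format, of 1 2] by (simp add: sum_4)
  have e1: "(k 1 1 + k 1 3)^2 + (k 2 1 + k 2 3)^2 = 1" using E[of 0 0] by simp
  have e2: "(- k 1 1 + k 1 3)^2 + (- k 2 1 + k 2 3)^2 = 1" using E[of pi 0] by simp
  have e3: "(k 1 1 + k 1 4)^2 + (k 2 1 + k 2 4)^2 = 1" using E[of 0 "pi/2"] by simp
  have e4: "(- k 1 1 + k 1 4)^2 + (- k 2 1 + k 2 4)^2 = 1" using E[of pi "pi/2"] by simp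
  have e5: "(k 1 2 + k 1 3)^2 + (k 2 2 + k 2 3)^2 = 1" using E[of "pi/2" 0] by simp
  have e6: "(- k 1 2 + k 1 3)^2 + (- k 2 2 + k 2 3)^2 = 1" using E[of "-pi/2" 0] by simp
  have e7: "(k 1 2 + k 1 4)^2 + (k 2 2 + k 2 4)^2 = 1" using E[of "pi/2" "pi/2"] by simp
  have e8: "(- k 1 2 + k 1 4)^2 + (- k 2 2 + k 2 4)^2 = 1" using E[of "-pi/2" "pi/2"] by simp
  have e9: "(k 1 1 * (sqrt 2/2) + k 1 2 * (sqrt 2/2) + k 1 3)^2 + (k 2 1 * (sqrt 2/2) + k 2 2 * (sqrt 2/2) + k 2 3)^2 = 1"
    using E[of "pi/4" 0] by (simp add: cos_45 sin_45)
  have e10: "(k 1 1 * (sqrt 2/2) - k 1 2 * (sqrt 2/2) + k 1 3)^2 + (k 2 1 * (sqrt 2/2) - k 2 2 * (sqrt 2/2) + k 2 3)^2 = 1"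
    using E[of "-pi/4" 0] by (simp add: cos_45 sin_45)
  have a13: "k 1 1 * k 1 3 + k 2 1 * k 2 3 = 0" using e1 e2 by algebra
  have a14: "k 1 1 * k 1 4 + k 2 1 * k 2 4 = 0" using e3 e4 by algebra
  have a23: "k 1 2 * k 1 3 + k 2 2 * k 2 3 = 0" using e5 e6 by algebra
  have a24: "k 1 2 * k 1 4 + k 2 2 * k 2 4 = 0" using e7 e8 by algebra
  have s13: "k 1 1^2 + k 2 1^2 + k 1 3^2 + k 2 3^2 = 1" using e1 e2 by algebra
  have s14: "k 1 1^2 + k 2 1^2 + k 1 4^2 + k 2 4^2 = 1" using e3 e4 by algebra
  have s23: "k 1 2^2 + k 2 2^2 + k 1 3^2 + k 2 3^2 = 1" using e5 e6 by algebra
  have sq2: "sqrt 2 * sqrt 2 = (2::real)" by simp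
  have a12: "k 1 1 * k 1 2 + k 2 1 * k 2 2 = 0"
    by (rule aux_a12[OF e9 e10 _ a23]) (simp_all add: power_divide)
  have lam: "(k 1 1^2 + k 2 1^2)^2 = k 1 1^2 + k 2 1^2"
    by (rule aux_lam[OF r11 r22 r12]) (use a12 a13 a14 in \<open>simp_all add: algebra_simps\<close>)
  then have "k 1 1^2 + k 2 1^2 = 0 \<or> k 1 1^2 + k 2 1^2 = 1"
    by (metis power2_eq_square mult_cancel_right1 mult_eq_0_iff)
  then show ?thesis
  proof
    assume L: "k 1 1^2 + k 2 1^2 = 1"
    have z1: "k 1 3 = 0" "k 2 3 = 0" using s13 L by (simp_all add: sum_power2_eq_zero_iff)
    have z2: "k 1 4 = 0" "k 2 4 = 0" using s14 L by (simp_all add: sum_power2_eq_zero_iff)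
    have A2: "k 1 2^2 + k 2 2^2 = 1" using s23 z1 by simp
    have z3: "k 3 1 = 0" "k 4 1 = 0" using c11 L by (simp_all add: sum_power2_eq_zero_iff)
    have z4: "k 3 2 = 0" "k 4 2 = 0" using c22 A2 by (simp_all add: sum_power2_eq_zero_iff)
    have B1: "k 3 3^2 + k 4 3^2 = 1" using c33 z1 by simp
    have B2: "k 3 4^2 + k 4 4^2 = 1" using c44 z2 by simp
    have B12: "k 3 3 * k 3 4 + k 4 3 * k 4 4 = 0" using c34 z1 z2 by simp
    obtain \<beta> \<epsilon> where be: "\<epsilon> = 1 \<or> \<epsilon> = -1"
      "\<And>s. k 1 1 * cos s + k 1 2 * sin s = cos (\<beta> + \<epsilon> * s) \<and> k 2 1 * cos s + k 2 2 * sin s = sin (\<beta> + \<epsilon> * s)"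
      using rot2[OF L A2 a12] by blast
    obtain \<gamma> \<delta> where gd: "\<delta> = 1 \<or> \<delta> = -1"
      "\<And>s. k 3 3 * cos s + k 3 4 * sin s = cos (\<gamma> + \<delta> * s) \<and> k 4 3 * cos s + k 4 4 * sin s = sin (\<gamma> + \<delta> * s)"
      using rot2[OF B1 B2 B12] by blast
    have "\<forall>s t. K *v cliff s t = cliff (\<beta> + \<epsilon> * s) (\<gamma> + \<delta> * t)"
      using be(2) gd(2) unfolding Kv by (simp add: cliff_def z1 z2 z3 z4)
    then show ?thesis using be(1) gd(1) by blast
  next
    assume L: "k 1 1^2 + k 2 1^2 = 0"
    have z1: "k 1 1 = 0" "k 2 1 = 0" using L by (simp_all add: sum_power2_eq_zero_iff)
    have X1: "k 1 3^2 + k 2 3^2 = 1" using s13 L by simp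
    have X2: "k 1 4^2 + k 2 4^2 = 1" using s14 L by simp
    have A0: "k 1 2^2 + k 2 2^2 = 0" using s23 X1 by linarith
    have z2: "k 1 2 = 0" "k 2 2 = 0" using A0 by (simp_all add: sum_power2_eq_zero_iff)
    have z3: "k 3 3 = 0" "k 4 3 = 0" using c33 X1 by (simp_all add: sum_power2_eq_zero_iff)
    have z4: "k 3 4 = 0" "k 4 4 = 0" using c44 X2 by (simp_all add: sum_power2_eq_zero_iff)
    have Y1: "k 3 1^2 + k 4 1^2 = 1" using c11 z1 by simp
    have Y2: "k 3 2^2 + k 4 2^2 = 1" using c22 z2 by simp
    have Y12: "k 3 1 * k 3 2 + k 4 1 * k 4 2 = 0" using c12 z1 z2 by simp
    have X12: "k 1 3 * k 1 4 + k 2 3 * k 2 4 = 0" using c34 z3 z4 by simp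
    obtain \<beta> \<epsilon> where be: "\<epsilon> = 1 \<or> \<epsilon> = -1"
      "\<And>s. k 1 3 * cos s + k 1 4 * sin s = cos (\<beta> + \<epsilon> * s) \<and> k 2 3 * cos s + k 2 4 * sin s = sin (\<beta> + \<epsilon> * s)"
      using rot2[OF X1 X2 X12] by blast
    obtain \<gamma> \<delta> where gd: "\<delta> = 1 \<or> \<delta> = -1"
      "\<And>s. k 3 1 * cos s + k 3 2 * sin s = cos (\<gamma> + \<delta> * s) \<and> k 4 1 * cos s + k 4 2 * sin s = sin (\<gamma> + \<delta> * s)"
      using rot2[OF Y1 Y2 Y12] by blast
    have "\<forall>s t. K *v cliff s t = cliff (\<beta> + \<epsilon> * t) (\<gamma> + \<delta> * s)"
      using be(2) gd(2) unfolding Kv by (simp add: cliff_def z1 z2 z3 z4)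
    then show ?thesis using be(1) gd(1) by blast
  qed
qed

(* ---- from G3.thy ---- *)
lemma orth_norm: "orthogonal_matrix M \<Longrightarrow> norm (M *v x) = norm (x::real^'n)"
  by (metis orthogonal_transformation_matrix orthogonal_transformation_norm matrix_of_matrix_vector_mul matrix_vector_mul_linear)

lemma cliff_T0: "cliff s t \<in> T0"
  by (simp add: T0_def cliff_def power_divide)

lemma norm_cliff: "norm (cliff s t) = 1"
proof -
  have "(norm (cliff s t))^2 = 1"
    apply (simp add: power2_norm_eq_inner inner_vec_def sum_4 cliff_def power2_eq_square[symmetric] power_divide)
    using sin_cos_squared_add[of s] sin_cos_squared_add[of t] by linarith
  then show ?thesis using norm_ge_zero[of "cliff s t"] by (auto simp: power2_eq_1_iff)
qed

lemma cliff_S3: "orthogonal_matrix M \<Longrightarrow> M *v cliff s t \<in> S3"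
  by (simp add: S3_def orth_norm norm_cliff)

lemma cliff_per1: "cliff (s + 2*pi) t = cliff s t" and cliff_per2: "cliff s (t + 2*pi) = cliff s t"
  by (simp_all add: cliff_def)

lemma orth_inv_left: "orthogonal_matrix M \<Longrightarrow> transpose M ** M = mat 1"
  and orth_inv_right: "orthogonal_matrix M \<Longrightarrow> M ** transpose M = mat 1"
  by (simp_all add: orthogonal_matrix_def)

lemma integral_invariance:
  fixes g :: "real^4 \<Rightarrow> real"
  assumes gc: "continuous_on UNIV g" and M: "orthogonal_matrix M" and N: "orthogonal_matrix N"
    and eq: "(*v) M ` T0 = (*v) N ` T0"
  shows "integral (cbox (0,0) (2*pi,2*pi)) (\<lambda>p. g (N *v cliff (fst p) (snd p)))
       = integral (cbox (0,0) (2*pi,2*pi)) (\<lambda>p. g (M *v cliff (fst p) (snd p)))"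
proof -
  define Kt where "Kt = transpose M ** N"
  have Kto: "orthogonal_matrix Kt" unfolding Kt_def using M N by (simp add: orthogonal_matrix_mul)
  have NK: "N *v x = M *v (Kt *v x)" for x
    by (simp add: Kt_def matrix_vector_mul_assoc matrix_mul_assoc orth_inv_right[OF M])
  have KT: "Kt *v cliff s t \<in> T0" for s t
  proof -
    have "N *v cliff s t \<in> (*v) M ` T0" using eq cliff_T0 by blast
    then obtain q where q: "q \<in> T0" "N *v cliff s t = M *v q" by blast
    have "Kt *v cliff s t = transpose M *v (N *v cliff s t)" unfolding Kt_def by (simp add: matrix_vector_mul_assoc)
    also have "\<dots> = q" using q(2) by (simp add: matrix_vector_mul_assoc orth_inv_left[OF M])
    finally show ?thesis using q(1) by simp
  qed
  define h where "h s t = g (M *v cliff s t)" for s t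
  have hc: "continuous_on UNIV (\<lambda>p. h (fst p) (snd p))" unfolding h_def
    by (rule continuous_on_compose2[OF gc]) (auto intro!: continuous_intros bounded_linear.continuous_on[OF matrix_vector_mul_bounded_linear])
  have p1: "h (s + 2*pi) t = h s t" and p2: "h s (t + 2*pi) = h s t" for s t
    unfolding h_def by (simp_all add: cliff_per1 cliff_per2)
  obtain \<beta> \<gamma> \<epsilon> \<delta> where e: "\<epsilon> = 1 \<or> \<epsilon> = -1" and d: "\<delta> = 1 \<or> \<delta> = -1" and
    C: "(\<forall>s t. Kt *v cliff s t = cliff (\<beta> + \<epsilon> * s) (\<gamma> + \<delta> * t)) \<or>
      (\<forall>s t. Kt *v cliff s t = cliff (\<beta> + \<epsilon> * t) (\<gamma> + \<delta> * s))"
    using stab[OF Kto KT] by blast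
  from C show ?thesis
  proof
    assume C1: "\<forall>s t. Kt *v cliff s t = cliff (\<beta> + \<epsilon> * s) (\<gamma> + \<delta> * t)"
    have "(\<lambda>p. g (N *v cliff (fst p) (snd p))) = (\<lambda>p. h (\<beta> + \<epsilon> * fst p) (\<gamma> + \<delta> * snd p))"
      using C1 by (simp add: NK h_def)
    then show ?thesis using inv2(1)[OF hc p1 p2 e d] by (simp add: h_def)
  next
    assume C2: "\<forall>s t. Kt *v cliff s t = cliff (\<beta> + \<epsilon> * t) (\<gamma> + \<delta> * s)"
    have "(\<lambda>p. g (N *v cliff (fst p) (snd p))) = (\<lambda>p. h (\<beta> + \<epsilon> * snd p) (\<gamma> + \<delta> * fst p))"
      using C2 by (simp add: NK h_def)
    then show ?thesis using inv2(2)[OF hc p1 p2 e d] by (simp add: h_def)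
  qed
qed

lemma Iint_eq:
  assumes M: "orthogonal_matrix M" and w: "\<forall>x\<in>S3. w x = f x" and fc: "continuous_on UNIV f"
  shows "Iint w ((*v) M ` T0) = integral (cbox (0,0) (2*pi,2*pi)) (\<lambda>p. f (M *v cliff (fst p) (snd p)) / 2)"
proof -
  have wf: "(\<lambda>(s,t). w (N *v cliff s t) / 2) = (\<lambda>p. f (N *v cliff (fst p) (snd p)) / 2)"
    if "orthogonal_matrix N" for N
    using w cliff_S3[OF that] by (auto simp: fun_eq_iff)
  have gc: "continuous_on UNIV (\<lambda>x. f x / 2)" by (intro continuous_intros fc) auto
  show ?thesis
    unfolding Iint_def
  proof (rule the_equality)
    show "\<exists>Ma. orthogonal_matrix Ma \<and> (*v) M ` T0 = (*v) Ma ` T0 \<and>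
        integral (cbox (0, 0) (2 * pi, 2 * pi)) (\<lambda>p. f (M *v cliff (fst p) (snd p)) / 2) =
        integral (cbox (0, 0) (2 * pi, 2 * pi)) (\<lambda>(s, t). w (Ma *v cliff s t) / 2)"
      using M by (intro exI[of _ M]) (simp add: wf[OF M])
  next
    fix c assume "\<exists>Ma. orthogonal_matrix Ma \<and> (*v) M ` T0 = (*v) Ma ` T0 \<and>
        c = integral (cbox (0, 0) (2 * pi, 2 * pi)) (\<lambda>(s, t). w (Ma *v cliff s t) / 2)"
    then obtain N where N: "orthogonal_matrix N" "(*v) M ` T0 = (*v) N ` T0"
      and c: "c = integral (cbox (0, 0) (2 * pi, 2 * pi)) (\<lambda>(s, t). w (N *v cliff s t) / 2)" by blast
    show "c = integral (cbox (0, 0) (2 * pi, 2 * pi)) (\<lambda>p. f (M *v cliff (fst p) (snd p)) / 2)"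
      using c wf[OF N(1)] integral_invariance[OF gc M N(1) N(2)] by simp
  qed
qed

(* ---- from I.thy ---- *)
datatype pexp = Cst real | Lin "real^4" | Add pexp pexp | Mul pexp pexp

fun ev :: "pexp \<Rightarrow> real^4 \<Rightarrow> real" where
  "ev (Cst r) x = r"
| "ev (Lin w) x = w \<bullet> x"
| "ev (Add p q) x = ev p x + ev q x"
| "ev (Mul p q) x = ev p x * ev q x"

fun dd :: "4 \<Rightarrow> pexp \<Rightarrow> pexp" where
  "dd i (Cst r) = Cst 0"
| "dd i (Lin w) = Cst (w $ i)"
| "dd i (Add p q) = Add (dd i p) (dd i q)"
| "dd i (Mul p q) = Add (Mul (dd i p) q) (Mul p (dd i q))"

fun ddl :: "4 list \<Rightarrow> pexp \<Rightarrow> pexp" where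
  "ddl [] e = e"
| "ddl (i # xs) e = dd i (ddl xs e)"

lemma ev_deriv: "(ev e has_derivative (\<lambda>h. \<Sum>i\<in>UNIV. h $ i * ev (dd i e) x)) (at x)"
proof (induction e)
  case (Cst r)
  then show ?case by simp
next
  case (Lin w)
  have "ev (Lin w) = (\<lambda>h. w \<bullet> h)" by (simp add: fun_eq_iff)
  then have "(ev (Lin w) has_derivative (\<lambda>h. w \<bullet> h)) (at x)"
    using bounded_linear.has_derivative[OF bounded_linear_inner_right has_derivative_ident, of w] by simp
  moreover have "(\<lambda>h. w \<bullet> h) = (\<lambda>h. \<Sum>i\<in>UNIV. h $ i * ev (dd i (Lin w)) x)"
    by (auto simp: inner_vec_def mult.commute)
  ultimately show ?case by metis
next
  case (Add p q)
  show ?case using has_derivative_add[OF Add.IH] by (simp add: sum.distrib algebra_simps fun_eq_iff)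
next
  case (Mul p q)
  have "((\<lambda>y. ev p y * ev q y) has_derivative
     (\<lambda>h. ev p x * (\<Sum>i\<in>UNIV. h $ i * ev (dd i q) x) + (\<Sum>i\<in>UNIV. h $ i * ev (dd i p) x) * ev q x)) (at x)"
    by (rule has_derivative_mult[OF Mul.IH])
  moreover have "(\<lambda>h. ev p x * (\<Sum>i\<in>UNIV. h $ i * ev (dd i q) x) + (\<Sum>i\<in>UNIV. h $ i * ev (dd i p) x) * ev q x)
     = (\<lambda>h. \<Sum>i\<in>UNIV. h $ i * ev (dd i (Mul p q)) x)"
    by (simp add: fun_eq_iff sum_distrib_left sum_distrib_right sum.distrib[symmetric] algebra_simps)
  ultimately show ?case by (simp add: fun_eq_iff)
qed

lemma sm_ev: "sm (\<lambda>xs. ev (ddl xs e))"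
  unfolding sm_def by (auto intro: ev_deriv)

lemma smooth4_ev: "smooth4 (ev e)"
  unfolding smooth4_sm using sm_ev[of e] by (intro exI[of _ "\<lambda>xs. ev (ddl xs e)"]) simp

definition vS :: "pexp \<Rightarrow> real^4 \<Rightarrow> real" where
  "vS e x = (if x \<in> S3 then ev e x else 0)"

lemma vS_in: "vS e \<in> Cinf_S3"
  unfolding Cinf_S3_def vS_def using smooth4_ev[of e] by auto


definition X :: "real^4^4 \<Rightarrow> 4 \<Rightarrow> pexp" where "X M j = Lin (M *v axis j 1)"
definition QE where "QE M = Add (Add (Mul (X M 1) (X M 1)) (Mul (X M 2) (X M 2)))
   (Add (Mul (Cst (-1)) (Mul (X M 3) (X M 3))) (Mul (Cst (-1)) (Mul (X M 4) (X M 4))))"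
definition LE where "LE M (l::real^4) = Add (Add (Mul (Cst (l$1)) (Mul (X M 1) (X M 3))) (Mul (Cst (l$2)) (Mul (X M 1) (X M 4))))
   (Add (Mul (Cst (l$3)) (Mul (X M 2) (X M 3))) (Mul (Cst (l$4)) (Mul (X M 2) (X M 4))))"
definition EE where "EE M l = Mul (QE M) (LE M l)"

lemma ev_X: "ev (X M j) x = (transpose M *v x) $ j"
  by (simp add: X_def inner_vec_def matrix_vector_mult_def transpose_def axis_def if_distrib mult.commute cong: if_cong)

lemma ev_EE_transform: "ev (EE M l) x = ev (EE (mat 1) l) (transpose M *v x)"
  by (simp add: EE_def QE_def LE_def ev_X)

lemma grad_transform:
  assumes e: "\<And>y. ev e2 y = ev e1 (transpose M *v y)" and M: "orthogonal_matrix M"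
  shows "(\<Sum>i\<in>UNIV. ev (dd i e2) (M *v p) * (M *v q) $ i) = (\<Sum>j\<in>UNIV. ev (dd j e1) p * q $ j)"
proof -
  define x where "x = M *v p"
  have d1: "(ev e2 has_derivative (\<lambda>h. \<Sum>i\<in>UNIV. h $ i * ev (dd i e2) x)) (at x)" by (rule ev_deriv)
  have "ev e2 = (\<lambda>y. ev e1 (transpose M *v y))" using e by (simp add: fun_eq_iff)
  moreover have "((\<lambda>y. ev e1 (transpose M *v y)) has_derivative
      (\<lambda>h. \<Sum>j\<in>UNIV. (transpose M *v h) $ j * ev (dd j e1) (transpose M *v x))) (at x)"
    by (rule has_derivative_compose[OF bounded_linear.has_derivative[OF matrix_vector_mul_bounded_linear[of "transpose M"] has_derivative_ident] ev_deriv[of e1 "transpose M *v x"]])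
  ultimately have d2: "(ev e2 has_derivative
      (\<lambda>h. \<Sum>j\<in>UNIV. (transpose M *v h) $ j * ev (dd j e1) (transpose M *v x))) (at x)" by simp
  have "(\<lambda>h. \<Sum>i\<in>UNIV. h $ i * ev (dd i e2) x) = (\<lambda>h. \<Sum>j\<in>UNIV. (transpose M *v h) $ j * ev (dd j e1) (transpose M *v x))"
    by (rule has_derivative_unique[OF d1 d2])
  then have "(\<Sum>i\<in>UNIV. (M *v q) $ i * ev (dd i e2) x) = (\<Sum>j\<in>UNIV. (transpose M *v (M *v q)) $ j * ev (dd j e1) (transpose M *v x))"
    by metis
  moreover have "transpose M *v (M *v q) = q" "transpose M *v x = p"
    using M by (simp_all add: x_def matrix_vector_mul_assoc orth_inv_left)
  ultimately show ?thesis by (simp add: x_def mult.commute)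
qed

definition dir :: "pexp \<Rightarrow> real^4 \<Rightarrow> real^4 \<Rightarrow> real" where
  "dir e x q = (\<Sum>j\<in>UNIV. ev (dd j e) x * q $ j)"

lemma dir_simps [simp]:
  "dir (Cst r) x q = 0"
  "dir (Lin w) x q = w \<bullet> q"
  "dir (Add e1 e2) x q = dir e1 x q + dir e2 x q"
  "dir (Mul e1 e2) x q = dir e1 x q * ev e2 x + ev e1 x * dir e2 x q"
  by (simp_all add: dir_def inner_vec_def sum.distrib sum_distrib_left sum_distrib_right algebra_simps)

lemma X1: "ev (X (mat 1) j) x = x $ j" "dir (X (mat 1) j) x q = q $ j"
  by (simp_all add: ev_X X_def inner_axis')

definition Ek where "Ek k c = PPn (mat 1) (dl k) 0 c"

lemma rv00: "rv i j 0 0 w = w"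
  by (simp add: rv_def vec_eq_iff)

lemma Ek_vals:
  "Ek 1 c = vector [- c$3, 0, c$1, 0]"
  "Ek 2 c = vector [- c$4, 0, 0, c$1]"
  "Ek 3 c = vector [0, - c$3, c$2, 0]"
  "Ek 4 c = vector [0, - c$4, 0, c$2]"
  by (simp_all add: Ek_def PPn_def PP_def dl_def rv00 rv_def vec_eq_iff forall_4)

lemma PPn0: "PPn M (\<lambda>_. 0) 0 c = M *v c"
  by (simp add: PPn_def PP_def rv00)

lemma PPnM: "PPn M n a c = M *v PPn (mat 1) n a c"
  by (simp add: PPn_def PP_def)


lemma gk_EE:
  assumes M: "orthogonal_matrix M"
  shows "gk (\<lambda>xs. ev (ddl xs (EE M l))) M k 0 st = dir (EE (mat 1) l) (cl st) (Ek k (cl st)) / 2"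
proof -
  have "(\<Sum>i\<in>UNIV. ev (dd i (EE M l)) (M *v cl st) * (M *v Ek k (cl st)) $ i)
      = (\<Sum>j\<in>UNIV. ev (dd j (EE (mat 1) l)) (cl st) * Ek k (cl st) $ j)"
    by (rule grad_transform[OF ev_EE_transform M])
  then show ?thesis
    unfolding gk_def dir_def by (simp add: PPn0 PPnM[of M "dl k"] Ek_def[symmetric])
qed

lemma dirE: "dir (EE (mat 1) l) c q = 2*(c$1*q$1 + c$2*q$2 - c$3*q$3 - c$4*q$4)
     * (l$1*(c$1*c$3) + l$2*(c$1*c$4) + l$3*(c$2*c$3) + l$4*(c$2*c$4)) + ev (QE (mat 1)) c * dir (LE (mat 1) l) c q"
  by (simp add: EE_def QE_def LE_def X1 algebra_simps)

lemma QE_cliff: "ev (QE (mat 1)) (cliff s t) = 0"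
  apply (simp add: QE_def X1 cliff_def power2_eq_square[symmetric] power_divide)
  using sin_cos_squared_add[of s] sin_cos_squared_add[of t] by linarith

lemma cliff_comp [simp]: "cliff s t $ 1 = cos s / sqrt 2" "cliff s t $ 2 = sin s / sqrt 2"
   "cliff s t $ 3 = cos t / sqrt 2" "cliff s t $ 4 = sin t / sqrt 2"
  by (simp_all add: cliff_def)

lemma integrand1: "dir (EE (mat 1) l) (cliff s t) (Ek 1 (cliff s t)) / 2 =
   -(1/2) * (l$1 * ((cos s * cos s) * (cos t * cos t)) + l$2 * ((cos s * cos s) * (cos t * sin t))
           + l$3 * ((cos s * sin s) * (cos t * cos t)) + l$4 * ((cos s * sin s) * (cos t * sin t)))"
proof -
  have r: "sqrt 2 * sqrt 2 = (2::real)" by simp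
  show ?thesis unfolding dirE QE_cliff Ek_vals
    by (simp add: field_simps)
qed


lemma integrand2: "dir (EE (mat 1) l) (cliff s t) (Ek 2 (cliff s t)) / 2 =
   -(1/2) * (l$1 * ((cos s * cos s) * (cos t * sin t)) + l$2 * ((cos s * cos s) * (sin t * sin t))
           + l$3 * ((cos s * sin s) * (cos t * sin t)) + l$4 * ((cos s * sin s) * (sin t * sin t)))"
  unfolding dirE QE_cliff Ek_vals by (simp add: field_simps)

lemma integrand3: "dir (EE (mat 1) l) (cliff s t) (Ek 3 (cliff s t)) / 2 =
   -(1/2) * (l$1 * ((cos s * sin s) * (cos t * cos t)) + l$2 * ((cos s * sin s) * (cos t * sin t))
           + l$3 * ((sin s * sin s) * (cos t * cos t)) + l$4 * ((sin s * sin s) * (cos t * sin t)))"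
  unfolding dirE QE_cliff Ek_vals by (simp add: field_simps)

lemma integrand4: "dir (EE (mat 1) l) (cliff s t) (Ek 4 (cliff s t)) / 2 =
   -(1/2) * (l$1 * ((cos s * sin s) * (cos t * sin t)) + l$2 * ((cos s * sin s) * (sin t * sin t))
           + l$3 * ((sin s * sin s) * (cos t * sin t)) + l$4 * ((sin s * sin s) * (sin t * sin t)))"
  unfolding dirE QE_cliff Ek_vals by (simp add: field_simps)

lemma I_cc: "((\<lambda>x. cos x * cos x) has_integral pi) {0..2*pi}"
proof -
  have "((\<lambda>x. cos x * cos x) has_integral ((sin (2*pi) * cos (2*pi) / 2 + 2*pi/2) - (sin 0 * cos 0 / 2 + 0/2))) {0..2*pi}"
  proof (rule fundamental_theorem_of_calculus)
    show "0 \<le> 2*pi" by simp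
    fix x :: real
    have "((\<lambda>x. sin x * cos x / 2 + x / 2) has_real_derivative (cos x * cos x)) (at x)"
      apply (rule derivative_eq_intros refl | simp)+
      using sin_cos_squared_add[of x] by algebra
    then show "((\<lambda>x. sin x * cos x / 2 + x / 2) has_vector_derivative cos x * cos x) (at x within {0..2*pi})"
      by (simp add: has_real_derivative_iff_has_vector_derivative has_vector_derivative_at_within)
  qed
  then show ?thesis by simp
qed

lemma I_ss: "((\<lambda>x. sin x * sin x) has_integral pi) {0..2*pi}"
proof -
  have "((\<lambda>x. sin x * sin x) has_integral ((2*pi/2 - sin (2*pi) * cos (2*pi) / 2) - (0/2 - sin 0 * cos 0 / 2))) {0..2*pi}"
  proof (rule fundamental_theorem_of_calculus)
    show "0 \<le> 2*pi" by simp
    fix x :: real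
    have "((\<lambda>x. x / 2 - sin x * cos x / 2) has_real_derivative (sin x * sin x)) (at x)"
      apply (rule derivative_eq_intros refl | simp)+
      using sin_cos_squared_add[of x] by algebra
    then show "((\<lambda>x. x / 2 - sin x * cos x / 2) has_vector_derivative sin x * sin x) (at x within {0..2*pi})"
      by (simp add: has_real_derivative_iff_has_vector_derivative has_vector_derivative_at_within)
  qed
  then show ?thesis by simp
qed

lemma I_cs: "((\<lambda>x. cos x * sin x) has_integral 0) {0..2*pi}"
proof -
  have "((\<lambda>x. cos x * sin x) has_integral (sin (2*pi) * sin (2*pi) / 2 - sin 0 * sin 0 / 2)) {0..2*pi}"
  proof (rule fundamental_theorem_of_calculus)
    show "0 \<le> 2*pi" by simp
    fix x :: real
    have "((\<lambda>x. sin x * sin x / 2) has_real_derivative (cos x * sin x)) (at x)"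
      by (rule derivative_eq_intros refl | simp)+
    then show "((\<lambda>x. sin x * sin x / 2) has_vector_derivative cos x * sin x) (at x within {0..2*pi})"
      by (simp add: has_real_derivative_iff_has_vector_derivative has_vector_derivative_at_within)
  qed
  then show ?thesis by simp
qed

lemma I_sc: "((\<lambda>x. sin x * cos x) has_integral 0) {0..2*pi}"
  using I_cs by (simp add: mult.commute)


lemma prod_has_integral:
  fixes \<phi> \<psi> :: "real \<Rightarrow> real"
  assumes A: "(\<phi> has_integral A) {0..2*pi}" and B: "(\<psi> has_integral B) {0..2*pi}"
    and c1: "continuous_on UNIV \<phi>" and c2: "continuous_on UNIV \<psi>"
  shows "((\<lambda>p. \<phi> (fst p) * \<psi> (snd p)) has_integral (A * B)) (cbox (0,0) (2*pi,2*pi))"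
proof -
  have cc: "continuous_on UNIV (\<lambda>p. \<phi> (fst p) * \<psi> (snd p))"
    by (intro continuous_intros continuous_on_compose2[OF c1] continuous_on_compose2[OF c2]) auto
  have int: "(\<lambda>p. \<phi> (fst p) * \<psi> (snd p)) integrable_on cbox (0,0) (2*pi,2*pi)"
    by (rule integrable_continuous[OF continuous_on_subset[OF cc]]) auto
  have "integral (cbox (0,0) (2*pi,2*pi)) (\<lambda>p. \<phi> (fst p) * \<psi> (snd p))
     = integral {0..2*pi} (\<lambda>s. integral {0..2*pi} (\<lambda>t. \<phi> s * \<psi> t))"
    by (rule KK_iter[where F="\<lambda>s t. \<phi> s * \<psi> t"]) (use cc in simp)
  also have "\<dots> = integral {0..2*pi} (\<lambda>s. \<phi> s * B)"
    using B by (simp add: integral_unique)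
  also have "\<dots> = A * B" using A by (simp add: integral_unique)
  finally show ?thesis using int by (metis has_integral_integrable_integral)
qed

lemma four_terms:
  fixes \<phi>1 \<phi>2 \<phi>3 \<phi>4 \<psi>1 \<psi>2 \<psi>3 \<psi>4 :: "real \<Rightarrow> real"
  assumes "(\<phi>1 has_integral A1) {0..2*pi}" "(\<psi>1 has_integral B1) {0..2*pi}"
    "(\<phi>2 has_integral A2) {0..2*pi}" "(\<psi>2 has_integral B2) {0..2*pi}"
    "(\<phi>3 has_integral A3) {0..2*pi}" "(\<psi>3 has_integral B3) {0..2*pi}"
    "(\<phi>4 has_integral A4) {0..2*pi}" "(\<psi>4 has_integral B4) {0..2*pi}"
    "continuous_on UNIV \<phi>1" "continuous_on UNIV \<psi>1" "continuous_on UNIV \<phi>2" "continuous_on UNIV \<psi>2"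
    "continuous_on UNIV \<phi>3" "continuous_on UNIV \<psi>3" "continuous_on UNIV \<phi>4" "continuous_on UNIV \<psi>4"
  shows "((\<lambda>p. -(1/2) * (l1 * (\<phi>1 (fst p) * \<psi>1 (snd p)) + l2 * (\<phi>2 (fst p) * \<psi>2 (snd p))
      + l3 * (\<phi>3 (fst p) * \<psi>3 (snd p)) + l4 * (\<phi>4 (fst p) * \<psi>4 (snd p))))
     has_integral (-(1/2) * (l1 * (A1 * B1) + l2 * (A2 * B2) + l3 * (A3 * B3) + l4 * (A4 * B4))))
     (cbox (0,0) (2*pi,2*pi))"
  using assms
  by (intro has_integral_mult_right has_integral_add prod_has_integral) auto

lemma cont_trig: "continuous_on UNIV (\<lambda>x::real. cos x * cos x)" "continuous_on UNIV (\<lambda>x::real. sin x * sin x)"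
  "continuous_on UNIV (\<lambda>x::real. cos x * sin x)" "continuous_on UNIV (\<lambda>x::real. sin x * cos x)"
  by (intro continuous_intros)+

lemma gradF_EE:
  assumes M: "orthogonal_matrix M"
  shows "gradF (\<lambda>xs. ev (ddl xs (EE M l))) M 0 = (- (pi^2/2)) *\<^sub>R l"
proof -
  have g: "gradF (\<lambda>xs. ev (ddl xs (EE M l))) M 0 $ k =
    integral (cbox (0,0) (2*pi,2*pi)) (\<lambda>p. dir (EE (mat 1) l) (cliff (fst p) (snd p)) (Ek k (cliff (fst p) (snd p))) / 2)" for k
  proof -
    have "gk (\<lambda>xs. ev (ddl xs (EE M l))) M k 0 =
      (\<lambda>p. dir (EE (mat 1) l) (cliff (fst p) (snd p)) (Ek k (cliff (fst p) (snd p))) / 2)"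
      by (rule ext) (simp add: gk_EE[OF M] cl_def)
    then show ?thesis by (simp add: gradF_def KK_def)
  qed
  have v1: "gradF (\<lambda>xs. ev (ddl xs (EE M l))) M 0 $ 1 = - (pi^2/2) * l$1"
    unfolding g integrand1
    by (rule integral_unique, rule has_integral_eq_rhs[OF four_terms[OF I_cc I_cc I_cc I_cs I_cs I_cc I_cs I_cs cont_trig(1,1,1,3,3,1,3,3)]])
       (simp add: power2_eq_square)
  have v2: "gradF (\<lambda>xs. ev (ddl xs (EE M l))) M 0 $ 2 = - (pi^2/2) * l$2"
    unfolding g integrand2
    by (rule integral_unique, rule has_integral_eq_rhs[OF four_terms[OF I_cc I_cs I_cc I_ss I_cs I_cs I_cs I_ss cont_trig(1,3,1,2,3,3,3,2)]])
       (simp add: power2_eq_square)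
  have v3: "gradF (\<lambda>xs. ev (ddl xs (EE M l))) M 0 $ 3 = - (pi^2/2) * l$3"
    unfolding g integrand3
    by (rule integral_unique, rule has_integral_eq_rhs[OF four_terms[OF I_cs I_cc I_cs I_cs I_ss I_cc I_ss I_cs cont_trig(3,1,3,3,2,1,2,3)]])
       (simp add: power2_eq_square)
  have v4: "gradF (\<lambda>xs. ev (ddl xs (EE M l))) M 0 $ 4 = - (pi^2/2) * l$4"
    unfolding g integrand4
    by (rule integral_unique, rule has_integral_eq_rhs[OF four_terms[OF I_cs I_cs I_cs I_ss I_ss I_cs I_ss I_ss cont_trig(3,3,3,2,2,3,2,2)]])
       (simp add: power2_eq_square)
  show ?thesis using v1 v2 v3 v4 by (simp add: vec_eq_iff forall_4)
qed

(* ---- from H.thy ---- *)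
definition Mchart :: "real^4^4 \<Rightarrow> real^4 \<Rightarrow> real^4^4" where
  "Mchart M0 a = M0 ** rot 1 3 (a$1) ** rot 1 4 (a$2) ** rot 2 3 (a$3) ** rot 2 4 (a$4)"

lemma Mchart_orth: "orthogonal_matrix M0 \<Longrightarrow> orthogonal_matrix (Mchart M0 a)"
  unfolding Mchart_def by (intro orthogonal_matrix_mul orth_rot)

lemma Mchart_PPn: "Mchart M0 a *v c = PPn M0 (\<lambda>_. 0) a c"
  by (simp add: Mchart_def PPn_def PP_def matrix_vector_mul_assoc[symmetric] rot_rv)

lemma chartCL_eq: "chartCL M0 a = (*v) (Mchart M0 a) ` T0"
  by (simp add: chartCL_def Mchart_def)

lemma Iint_chart:
  assumes M0: "orthogonal_matrix M0" and w: "\<forall>x\<in>S3. w x = D [] x" and sD: "sm D"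
  shows "Iint w (chartCL M0 a) = Fm D M0 a"
proof -
  have "Iint w (chartCL M0 a) = integral (cbox (0,0) (2*pi,2*pi)) (\<lambda>p. D [] (Mchart M0 a *v cliff (fst p) (snd p)) / 2)"
    unfolding chartCL_eq by (rule Iint_eq[OF Mchart_orth[OF M0] w sm_cont[OF sD]])
  also have "(\<lambda>p. D [] (Mchart M0 a *v cliff (fst p) (snd p)) / 2) = phi D M0 a"
    by (simp add: fun_eq_iff phi_def Mchart_PPn cl_def)
  also have "integral (cbox (0,0) (2*pi,2*pi)) (phi D M0 a) = Fm D M0 a"
    by (simp add: Fm_def KK_def)
  finally show ?thesis .
qed

lemma sm_comb: "sm Du \<Longrightarrow> sm Dv \<Longrightarrow> sm (\<lambda>xs x. Du xs x + e * Dv xs x)"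
  unfolding sm_def
  apply (intro allI)
  apply (rule has_derivative_eq_rhs)
   apply (rule has_derivative_add, blast, rule has_derivative_mult_right, blast)
  apply (simp add: fun_eq_iff sum.distrib sum_distrib_left algebra_simps)
  done

lemma gradF_comb:
  assumes "sm Du" "sm Dv"
  shows "gradF (\<lambda>xs x. Du xs x + e * Dv xs x) M a = gradF Du M a + e *\<^sub>R gradF Dv M a"
proof -
  have gk: "gk (\<lambda>xs x. Du xs x + e * Dv xs x) M k a = (\<lambda>st. gk Du M k a st + e * gk Dv M k a st)" for k
    by (simp add: fun_eq_iff gk_def sum.distrib sum_distrib_left algebra_simps add_divide_distrib)
  have ci: "gk D M k a integrable_on KK" if "sm D" for D k
  proof -
    have cP: "continuous_on KK (\<lambda>st. (a, st))" by (intro continuous_intros)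
    have "continuous_on KK (gk D M k a)"
      using continuous_on_compose2[OF gk_cont[OF that] cP] by simp
    then show ?thesis unfolding KK_def by (rule integrable_continuous)
  qed
  have "integral KK (\<lambda>st. gk Du M k a st + e * gk Dv M k a st) =
         integral KK (gk Du M k a) + e * integral KK (gk Dv M k a)" for k
  proof -
    have "integral KK (\<lambda>st. gk Du M k a st + e * gk Dv M k a st) =
         integral KK (gk Du M k a) + integral KK (\<lambda>st. e * gk Dv M k a st)"
      by (rule integral_add) (auto intro: ci assms integrable_on_mult_right)
    then show ?thesis by simp
  qed
  then show ?thesis
    unfolding gradF_def by (simp add: vec_eq_iff gk)
qed

lemma J1_eq:
  assumes M0: "orthogonal_matrix M0" and w: "\<forall>x\<in>S3. w x = D [] x" and sD: "sm D"
  shows "J1chart M0 w a = (a, gradF D M0 a)"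
proof -
  have "(\<lambda>b. Iint w (chartCL M0 b)) = Fm D M0" using Iint_chart[OF M0 w sD] by (simp add: fun_eq_iff)
  then have "frechet_derivative (\<lambda>b. Iint w (chartCL M0 b)) (at a) = (\<lambda>h. \<Sum>k\<in>UNIV. h$k * gradF D M0 a $ k)"
    using frechet_derivative_at[OF F_deriv[OF sD]] by simp
  moreover have "(\<Sum>k\<in>UNIV. axis i 1 $ k * G $ k) = G $ i" for i and G :: "real^4"
    using exhaust_4[of i] by (auto simp: sum_4 axis_def)
  ultimately show ?thesis
    unfolding J1chart_def by (simp add: vec_eq_iff)
qed


definition DG where "DG D M h = (\<chi> k. \<Sum>l\<in>UNIV. h$l * integral KK (hkl D M k l 0))"

lemma gradF_line:
  assumes sD: "sm D"
  shows "((\<lambda>e. gradF D M (e *\<^sub>R b)) has_vector_derivative DG D M b) (at 0)"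
proof -
  have s: "((\<lambda>e::real. e *\<^sub>R b) has_derivative (\<lambda>h. h *\<^sub>R b)) (at 0)"
    by (rule bounded_linear.has_derivative[OF bounded_linear_scaleR_left has_derivative_ident])
  have "((\<lambda>e. gradF D M (e *\<^sub>R b)) has_derivative
      (\<lambda>h. \<chi> k. \<Sum>l\<in>UNIV. (h *\<^sub>R b)$l * integral KK (hkl D M k l (0 *\<^sub>R b)))) (at 0)"
    by (rule has_derivative_compose[OF s gradF_deriv[OF sD]])
  moreover have "(\<lambda>h. \<chi> k. \<Sum>l\<in>UNIV. (h *\<^sub>R b)$l * integral KK (hkl D M k l (0 *\<^sub>R b))) = (\<lambda>h. h *\<^sub>R DG D M b)"
    by (simp add: fun_eq_iff vec_eq_iff DG_def sum_distrib_left mult.assoc)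
  ultimately show ?thesis unfolding has_vector_derivative_def by simp
qed

lemma curve_deriv:
  assumes sDu: "sm Du" and sDv: "sm Dv"
  shows "((\<lambda>e. (e *\<^sub>R b, gradF Du M (e *\<^sub>R b) + e *\<^sub>R gradF Dv M (e *\<^sub>R b)))
     has_vector_derivative (b, DG Du M b + gradF Dv M 0)) (at 0)"
proof -
  have s: "((\<lambda>e::real. e *\<^sub>R b) has_vector_derivative b) (at 0)"
    unfolding has_vector_derivative_def
    by (rule bounded_linear.has_derivative[OF bounded_linear_scaleR_left has_derivative_ident])
  have B: "((\<lambda>e. e *\<^sub>R gradF Dv M (e *\<^sub>R b)) has_vector_derivative gradF Dv M 0) (at 0)"
    using has_vector_derivative_scaleR[OF DERIV_ident gradF_line[OF sDv, of M b]] by simp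
  show ?thesis
    by (intro has_vector_derivative_Pair s has_vector_derivative_add gradF_line sDu B)
qed


theorem lemma3p4:
  assumes "orthogonal_matrix M0" and "u \<in> Cinf_S3"
  shows "\<exists>L. (\<forall>v\<in>Cinf_S3. \<forall>b. ((\<lambda>\<epsilon>. J1chart M0 (\<lambda>x. u x + \<epsilon> * v x) (\<epsilon> *\<^sub>R b))
                 has_vector_derivative L v b) (at 0))
           \<and> (\<forall>w. \<exists>v\<in>Cinf_S3. \<exists>b. L v b = w)"
proof -
  note M0 = assms(1)
  obtain fu where fu: "smooth4 fu" "\<forall>x\<in>S3. u x = fu x"
    using assms(2) unfolding Cinf_S3_def by blast
  obtain Du where Du: "Du [] = fu" "sm Du" using fu(1) unfolding smooth4_sm by blast
  have key: "((\<lambda>\<epsilon>. J1chart M0 (\<lambda>x. u x + \<epsilon> * v x) (\<epsilon> *\<^sub>R b))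
       has_vector_derivative (b, DG Du M0 b + gradF Dv M0 0)) (at 0)"
    if sDv: "sm Dv" and vD: "\<forall>x\<in>S3. v x = Dv [] x" for v Dv b
  proof -
    have "J1chart M0 (\<lambda>x. u x + e * v x) (e *\<^sub>R b) =
        (e *\<^sub>R b, gradF Du M0 (e *\<^sub>R b) + e *\<^sub>R gradF Dv M0 (e *\<^sub>R b))" for e
    proof -
      have w: "\<forall>x\<in>S3. u x + e * v x = (\<lambda>xs x. Du xs x + e * Dv xs x) [] x"
        using fu(2) vD Du(1) by simp
      show ?thesis
        using J1_eq[OF M0 w sm_comb[OF Du(2) sDv]] gradF_comb[OF Du(2) sDv] by simp
    qed
    then have "(\<lambda>\<epsilon>. J1chart M0 (\<lambda>x. u x + \<epsilon> * v x) (\<epsilon> *\<^sub>R b)) =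
       (\<lambda>e. (e *\<^sub>R b, gradF Du M0 (e *\<^sub>R b) + e *\<^sub>R gradF Dv M0 (e *\<^sub>R b)))" by (simp add: fun_eq_iff)
    then show ?thesis using curve_deriv[OF Du(2) sDv] by simp
  qed
  define L where "L v b = vector_derivative (\<lambda>\<epsilon>. J1chart M0 (\<lambda>x. u x + \<epsilon> * v x) (\<epsilon> *\<^sub>R b)) (at 0)" for v b
  have Lval: "L v b = (b, DG Du M0 b + gradF Dv M0 0)" if "sm Dv" "\<forall>x\<in>S3. v x = Dv [] x" for v Dv b
    unfolding L_def by (rule vector_derivative_at[OF key[OF that]])
  have P1: "\<forall>v\<in>Cinf_S3. \<forall>b. ((\<lambda>\<epsilon>. J1chart M0 (\<lambda>x. u x + \<epsilon> * v x) (\<epsilon> *\<^sub>R b))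
                 has_vector_derivative L v b) (at 0)"
  proof (intro ballI allI)
    fix v b assume "v \<in> Cinf_S3"
    then obtain fv where fv: "smooth4 fv" "\<forall>x\<in>S3. v x = fv x" unfolding Cinf_S3_def by blast
    obtain Dv where Dv: "Dv [] = fv" "sm Dv" using fv(1) unfolding smooth4_sm by blast
    have vD: "\<forall>x\<in>S3. v x = Dv [] x" using fv(2) Dv(1) by simp
    show "((\<lambda>\<epsilon>. J1chart M0 (\<lambda>x. u x + \<epsilon> * v x) (\<epsilon> *\<^sub>R b)) has_vector_derivative L v b) (at 0)"
      using key[OF Dv(2) vD] Lval[OF Dv(2) vD] by simp
  qed
  have P2: "\<forall>w. \<exists>v\<in>Cinf_S3. \<exists>b. L v b = w"
  proof
    fix w :: "(real^4) \<times> (real^4)"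
    obtain w1 w2 where w: "w = (w1, w2)" by (cases w)
    define l where "l = (- 2 / pi^2) *\<^sub>R (w2 - DG Du M0 w1)"
    define Dv where "Dv xs = ev (ddl xs (EE M0 l))" for xs
    have sDv: "sm Dv" unfolding Dv_def by (rule sm_ev)
    have vD: "\<forall>x\<in>S3. vS (EE M0 l) x = Dv [] x" by (simp add: vS_def Dv_def)
    have g: "gradF Dv M0 0 = w2 - DG Du M0 w1"
      unfolding Dv_def gradF_EE[OF M0] l_def by (simp add: scaleR_scaleR)
    have "L (vS (EE M0 l)) w1 = w" using Lval[OF sDv vD] g w by simp
    then show "\<exists>v\<in>Cinf_S3. \<exists>b. L v b = w" using vS_in by blast
  qed
  show ?thesis using P1 P2 by blast
qed

end
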